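(* Let $G=(V,E)$ be a connected graph with at least two vertices. Call a multiset $\mathcal{D}$ of edges of $G$ a domino covering if every vertex is an endpoint of some edge of $\mathcal{D}$, and call it saturated if removing any single edge from $\mathcal{D}$ leaves some vertex not an endpoint of any remaining edge. Then the maximum number of edges in a saturated domino covering of $G$ equals $|V| - \gamma(G)$, where $\gamma(G)$ is the domination number of $G$ (the minimum number of vertex sets of star subgraphs of $G$ needed to cover $V$). *)

theory Defs
  imports Main "HOL-Library.Multiset"
begin

definition simple_graph :: "'a set \<Rightarrow> 'a set set \<Rightarrow> bool" where
  "simple_graph V E \<longleftrightarrow> finite V \<and>
     (\<forall>e\<in>E. \<exists>u v. e = {u, v} \<and> u \<noteq> v \<and> u \<in> V \<and> v \<in> V)"

definition adj :: "'a set set \<Rightarrow> 'a \<Rightarrow> 'a \<Rightarrow> bool" where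
  "adj E u v \<longleftrightarrow> {u, v} \<in> E"

definition connected_graph :: "'a set \<Rightarrow> 'a set set \<Rightarrow> bool" where
  "connected_graph V E \<longleftrightarrow> (\<forall>u\<in>V. \<forall>v\<in>V. (adj E)\<^sup>*\<^sup>* u v)"

definition domino_covering :: "'a set \<Rightarrow> 'a set set \<Rightarrow> 'a set multiset \<Rightarrow> bool" where
  "domino_covering V E D \<longleftrightarrow> set_mset D \<subseteq> E \<and> (\<forall>v\<in>V. \<exists>e\<in>#D. v \<in> e)"

definition saturated :: "'a set \<Rightarrow> 'a set multiset \<Rightarrow> bool" where
  "saturated V D \<longleftrightarrow> (\<forall>e\<in>#D. \<exists>v\<in>V. \<forall>e'\<in># D - {#e#}. v \<notin> e')"

definition star_vset :: "'a set \<Rightarrow> 'a set set \<Rightarrow> 'a set \<Rightarrow> bool" where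
  "star_vset V E S \<longleftrightarrow> (\<exists>c\<in>S. S \<subseteq> V \<and> S - {c} \<noteq> {} \<and> (\<forall>x\<in>S - {c}. adj E c x))"

definition domination_number :: "'a set \<Rightarrow> 'a set set \<Rightarrow> nat" where
  "domination_number V E = (LEAST k. \<exists>F. finite F \<and> card F = k \<and>
      (\<forall>S\<in>F. star_vset V E S) \<and> V \<subseteq> \<Union>F)"

end

theory Submission
  imports Defs
begin


lemma edge_facts:
  assumes "simple_graph V E" "e \<in> E"
  shows "\<exists>a b. e = {a,b} \<and> a \<noteq> b \<and> a \<in> V \<and> b \<in> V"
  using assms unfolding simple_graph_def by blast

lemma edge_pair:
  assumes "simple_graph V E" "{x,y} \<in> E"
  shows "x \<noteq> y \<and> x \<in> V \<and> y \<in> V"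
proof -
  obtain a b where "{x,y} = {a,b}" "a \<noteq> b" "a \<in> V" "b \<in> V"
    using edge_facts[OF assms] by blast
  then show ?thesis by (metis doubleton_eq_iff)
qed

lemma upper:
  assumes sg: "simple_graph V E" and dc: "domino_covering V E D" and sat: "saturated V D"
  shows "size D + domination_number V E \<le> card V"
proof -
  have fin: "finite V" using sg simple_graph_def by auto
  have DE: "set_mset D \<subseteq> E" and cov: "\<forall>v\<in>V. \<exists>e\<in>#D. v \<in> e"
    using dc unfolding domino_covering_def by auto
  have "\<forall>e\<in>#D. \<exists>v. v \<in> V \<and> (\<forall>e'\<in># D - {#e#}. v \<notin> e')"
    using sat unfolding saturated_def by blast
  then obtain p where p: "\<And>e. e \<in># D \<Longrightarrow> p e \<in> V \<and> (\<forall>e'\<in># D - {#e#}. p e \<notin> e')"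
    by metis
  have pe: "p e \<in> e" and single: "e \<notin># D - {#e#}" if eD: "e \<in># D" for e
  proof -
    obtain e'' where "e'' \<in># D" "p e \<in> e''" using cov p[OF eD] by blast
    note ee = this
    have "e'' = e"
    proof (rule ccontr)
      assume "e'' \<noteq> e"
      then have "e'' \<in># D - {#e#}" using ee(1) by (simp add: in_diff_count)
      then show False using p[OF eD] ee(2) by blast
    qed
    then show "p e \<in> e" using ee by simp
    then show "e \<notin># D - {#e#}" using p[OF eD] by blast
  qed
  have pother: "p e \<notin> e'" if "e \<in># D" "e' \<in># D" "e' \<noteq> e" for e e'
  proof -
    have "e' \<in># D - {#e#}" using that by (simp add: in_diff_count)
    then show ?thesis using p[OF that(1)] by blast
  qed
  have Deq: "D = mset_set (set_mset D)"
  proof (rule multiset_eqI)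
    fix x show "count D x = count (mset_set (set_mset D)) x"
    proof (cases "x \<in># D")
      case True
      then have "count D x \<le> 1" using single[OF True] by (simp add: in_diff_count)
      then show ?thesis using True by (simp add: count_mset_set' count_eq_zero_iff le_Suc_eq)
    next
      case False then show ?thesis by (simp add: count_mset_set' not_in_iff)
    qed
  qed
  have sizeD: "size D = card (set_mset D)" by (subst Deq) (simp add: size_mset_set)
  have injp: "inj_on p (set_mset D)"
    using pe pother by (metis inj_onI)
  define L where "L = p ` set_mset D"
  have LV: "L \<subseteq> V" using p L_def by auto
  have cardL: "card L = size D" using sizeD injp L_def card_image by metis
  define C where "C = V - L"
  have cardC: "card C = card V - size D" using C_def cardL LV fin
    by (simp add: card_Diff_subset finite_subset)
  define S where "S c = insert c {x. {c,x} \<in> set_mset D \<and> x \<noteq> c}" for c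
  have eV: "\<And>e. e \<in># D \<Longrightarrow> \<exists>a b. e = {a,b} \<and> a \<noteq> b \<and> a \<in> V \<and> b \<in> V"
    using DE edge_facts[OF sg] by blast
  have other: "\<exists>w. w \<noteq> p e \<and> e = {p e, w} \<and> w \<in> V" if eD: "e \<in># D" for e
  proof -
    obtain a b where ab: "e = {a,b}" "a \<noteq> b" "a \<in> V" "b \<in> V" using eV[OF eD] by blast
    have "p e = a \<or> p e = b" using pe[OF eD] ab by auto
    then show ?thesis
    proof
      assume "p e = a" then show ?thesis using ab by (intro exI[of _ b]) auto
    next
      assume "p e = b" then show ?thesis using ab by (intro exI[of _ a]) (auto simp: insert_commute)
    qed
  qed
  have star: "star_vset V E (S c)" if cC: "c \<in> C" for c
    unfolding star_vset_def
  proof (intro bexI[of _ c] conjI)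
    show "c \<in> S c" using S_def by auto
    show "S c \<subseteq> V" using cC C_def S_def DE edge_pair[OF sg] by auto
    show "\<forall>x\<in>S c - {c}. adj E c x" using S_def DE by (auto simp: adj_def)
    obtain e where e: "e \<in># D" "c \<in> e" using cov cC C_def by auto
    have "c \<noteq> p e" using cC e C_def L_def by auto
    then have "e = {c, p e}" using eV[OF e(1)] pe[OF e(1)] e(2) by auto
    then have "p e \<in> S c - {c}" using e \<open>c \<noteq> p e\<close> S_def by auto
    then show "S c - {c} \<noteq> {}" by blast
  qed
  have covS: "V \<subseteq> \<Union>(S ` C)"
  proof
    fix v assume v: "v \<in> V"
    show "v \<in> \<Union>(S ` C)"
    proof (cases "v \<in> L")
      case False then show ?thesis using v C_def S_def by auto
    next
      case True
      then obtain e where e: "e \<in># D" "v = p e" using L_def by auto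
      obtain w where w: "w \<noteq> p e" "e = {p e, w}" "w \<in> V" using other[OF e(1)] by blast
      have "w \<notin> L"
      proof
        assume "w \<in> L"
        then obtain e' where e': "e' \<in># D" "w = p e'" using L_def by auto
        have "e' = e" using pother[OF e'(1) e(1)] e' w by auto
        then show False using w e' by auto
      qed
      then have "w \<in> C" using w C_def by auto
      moreover have "v \<in> S w" using S_def e w by (auto simp: insert_commute)
      ultimately show ?thesis by blast
    qed
  qed
  have finC: "finite C" using C_def fin by auto
  have "domination_number V E \<le> card (S ` C)"
    unfolding domination_number_def
    by (rule Least_le) (use finC star covS in auto)
  also have "\<dots> \<le> card C" using finC card_image_le by blast
  finally have "domination_number V E \<le> card C" .
  moreover have "card L \<le> card V" using card_mono[OF fin LV] .
  ultimately show ?thesis using cardC cardL by linarith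
qed


definition goodh :: "'a set \<Rightarrow> 'a set set \<Rightarrow> ('a \<Rightarrow> 'a) \<Rightarrow> bool" where
  "goodh V E h \<longleftrightarrow> (\<forall>v\<in>V. h v \<in> V \<and> h (h v) = h v \<and> (h v \<noteq> v \<longrightarrow> {v, h v} \<in> E))"
definition cent :: "'a set \<Rightarrow> ('a \<Rightarrow> 'a) \<Rightarrow> 'a set" where
  "cent V h = {v\<in>V. h v = v}"
definition badc :: "'a set \<Rightarrow> ('a \<Rightarrow> 'a) \<Rightarrow> 'a set" where
  "badc V h = {c \<in> cent V h. \<forall>v\<in>V. h v = c \<longrightarrow> v = c}"

lemma case1:
  assumes g: "goodh V E h" and t: "t \<in> badc V h" and u: "u \<in> V" "u \<noteq> t" "{t,u} \<in> E"
    and hu: "h u = u"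
  shows "goodh V E (h(t := u)) \<and> cent V (h(t := u)) \<subseteq> cent V h \<and> badc V (h(t := u)) \<subseteq> badc V h - {t}"
proof -
  have tV: "t \<in> V" "h t = t" and tb: "\<And>v. v \<in> V \<Longrightarrow> h v = t \<Longrightarrow> v = t"
    using t unfolding badc_def cent_def by auto
  have g1: "goodh V E (h(t := u))"
    unfolding goodh_def
  proof
    fix v assume v: "v \<in> V"
    show "(h(t := u)) v \<in> V \<and> (h(t := u)) ((h(t := u)) v) = (h(t := u)) v \<and>
          ((h(t := u)) v \<noteq> v \<longrightarrow> {v, (h(t := u)) v} \<in> E)"
    proof (cases "v = t")
      case True then show ?thesis using u hu by auto
    next
      case False
      then have "h v \<noteq> t" using tb v by blast
      then show ?thesis using False g v unfolding goodh_def by auto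
    qed
  qed
  moreover have "cent V (h(t := u)) \<subseteq> cent V h" using u unfolding cent_def by auto
  moreover have "badc V (h(t := u)) \<subseteq> badc V h - {t}"
  proof
    fix c assume c: "c \<in> badc V (h(t := u))"
    then have c1: "c \<in> V" "c \<noteq> t" "h c = c" and c2: "\<And>v. v \<in> V \<Longrightarrow> (h(t := u)) v = c \<Longrightarrow> v = c"
      using u unfolding badc_def cent_def by (auto split: if_splits)
    have "\<forall>v\<in>V. h v = c \<longrightarrow> v = c"
    proof (intro ballI impI)
      fix v assume "v \<in> V" "h v = c"
      then show "v = c" using c2[of v] c1 tV by (cases "v = t") auto
    qed
    then show "c \<in> badc V h - {t}" using c1 unfolding badc_def cent_def by auto
  qed
  ultimately show ?thesis by blast
qed

lemma case2:
  assumes g: "goodh V E h" and t: "t \<in> badc V h" and u: "u \<in> V" "u \<noteq> t" "{t,u} \<in> E"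
    and hu: "h u \<noteq> u" and w: "w \<in> V" "w \<noteq> u" "w \<noteq> h u" "h w = h u"
  shows "goodh V E (h(u := t)) \<and> cent V (h(u := t)) \<subseteq> cent V h \<and> badc V (h(u := t)) \<subseteq> badc V h - {t}"
proof -
  have tV: "t \<in> V" "h t = t" and tb: "\<And>v. v \<in> V \<Longrightarrow> h v = t \<Longrightarrow> v = t"
    using t unfolding badc_def cent_def by auto
  have uc: "\<And>v. v \<in> V \<Longrightarrow> h v \<noteq> u" using g hu unfolding goodh_def by metis
  have g1: "goodh V E (h(u := t))"
    unfolding goodh_def
  proof
    fix v assume v: "v \<in> V"
    show "(h(u := t)) v \<in> V \<and> (h(u := t)) ((h(u := t)) v) = (h(u := t)) v \<and>
          ((h(u := t)) v \<noteq> v \<longrightarrow> {v, (h(u := t)) v} \<in> E)"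
    proof (cases "v = u")
      case True then show ?thesis using u tV by (auto simp: insert_commute)
    next
      case False
      then show ?thesis using uc[OF v] g v unfolding goodh_def by auto
    qed
  qed
  moreover have "cent V (h(u := t)) \<subseteq> cent V h" using u unfolding cent_def by auto
  moreover have "badc V (h(u := t)) \<subseteq> badc V h - {t}"
  proof
    fix c assume c: "c \<in> badc V (h(u := t))"
    then have c1: "c \<in> V" "c \<noteq> u" "h c = c" and c2: "\<And>v. v \<in> V \<Longrightarrow> (h(u := t)) v = c \<Longrightarrow> v = c"
      using u unfolding badc_def cent_def by (auto split: if_splits)
    have ct: "c \<noteq> t" using c2[of u] u by auto
    have "\<forall>v\<in>V. h v = c \<longrightarrow> v = c"
    proof (intro ballI impI)
      fix v assume v: "v \<in> V" "h v = c"
      show "v = c"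
      proof (cases "v = u")
        case False then show ?thesis using c2[of v] v by auto
      next
        case True
        then have "h w = c" using v w by auto
        then show ?thesis using c2[of w] w by auto
      qed
    qed
    then show "c \<in> badc V h - {t}" using c1 ct unfolding badc_def cent_def by auto
  qed
  ultimately show ?thesis by blast
qed

lemma case3:
  assumes g: "goodh V E h" and t: "t \<in> badc V h" and u: "u \<in> V" "u \<noteq> t" "{t,u} \<in> E"
    and hu: "h u \<noteq> u" and w: "\<And>w. w \<in> V \<Longrightarrow> h w = h u \<Longrightarrow> w = u \<or> w = h u"
  shows "goodh V E (h(u := u, h u := u, t := u)) \<and> cent V (h(u := u, h u := u, t := u)) \<subseteq> insert u (cent V h - {t})
     \<and> badc V (h(u := u, h u := u, t := u)) \<subseteq> badc V h - {t}"
proof -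
  define c where "c = h u"
  define h1 where "h1 = h(u := u, c := u, t := u)"
  have tV: "t \<in> V" "h t = t" and tb: "\<And>v. v \<in> V \<Longrightarrow> h v = t \<Longrightarrow> v = t"
    using t unfolding badc_def cent_def by auto
  have uc: "\<And>v. v \<in> V \<Longrightarrow> h v \<noteq> u" using g hu unfolding goodh_def by metis
  have cV: "c \<in> V" "h c = c" "{u, c} \<in> E" using g u hu unfolding goodh_def c_def by auto
  have ct: "c \<noteq> t" using tb[OF u(1)] u c_def by auto
  have cu: "c \<noteq> u" using hu c_def by auto
  have h1u: "h1 u = u" "h1 c = u" "h1 t = u" using h1_def cu ct u by auto
  have h1o: "\<And>v. v \<noteq> u \<Longrightarrow> v \<noteq> c \<Longrightarrow> v \<noteq> t \<Longrightarrow> h1 v = h v" using h1_def by auto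
  have g1: "goodh V E h1"
    unfolding goodh_def
  proof
    fix v assume v: "v \<in> V"
    show "h1 v \<in> V \<and> h1 (h1 v) = h1 v \<and> (h1 v \<noteq> v \<longrightarrow> {v, h1 v} \<in> E)"
    proof (cases "v = u \<or> v = c \<or> v = t")
      case True then show ?thesis using h1u u cV by (auto simp: insert_commute)
    next
      case False
      then have "h v \<noteq> t" "h v \<noteq> c" "h v \<noteq> u" using tb[OF v] w[OF v] uc[OF v] c_def by auto
      then show ?thesis using False h1o g v unfolding goodh_def by auto
    qed
  qed
  moreover have "cent V h1 \<subseteq> insert u (cent V h - {t})"
    using h1u h1o ct unfolding cent_def by force
  moreover have "badc V h1 \<subseteq> badc V h - {t}"
  proof
    fix d assume d: "d \<in> badc V h1"
    then have d1: "d \<in> V" "h1 d = d" and d2: "\<And>v. v \<in> V \<Longrightarrow> h1 v = d \<Longrightarrow> v = d"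
      unfolding badc_def cent_def by auto
    have dn: "d \<noteq> u" "d \<noteq> c" "d \<noteq> t" using d2[OF cV(1)] h1u d1 cu ct u by auto
    then have hd: "h d = d" using d1 h1o by auto
    have "\<forall>v\<in>V. h v = d \<longrightarrow> v = d"
    proof (intro ballI impI)
      fix v assume v: "v \<in> V" "h v = d"
      have "v \<noteq> u" "v \<noteq> c" "v \<noteq> t" using v dn c_def cV tV by auto
      then show "v = d" using d2[of v] v h1o by auto
    qed
    then show "d \<in> badc V h - {t}" using d1 hd dn unfolding badc_def cent_def by auto
  qed
  ultimately show ?thesis unfolding h1_def c_def by blast
qed


lemma fixlem:
  assumes fin: "finite V" and nb: "\<forall>v\<in>V. \<exists>u\<in>V. u \<noteq> v \<and> {v,u} \<in> E" and g: "goodh V E h"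
  shows "\<exists>h'. goodh V E h' \<and> badc V h' = {} \<and> card (cent V h') \<le> card (cent V h)"
  using g
proof (induction "card (badc V h)" arbitrary: h rule: less_induct)
  case less
  show ?case
  proof (cases "badc V h = {}")
    case True then show ?thesis using less.prems by blast
  next
    case False
    then obtain t where t: "t \<in> badc V h" by blast
    then have tV: "t \<in> V" "t \<in> cent V h" unfolding badc_def cent_def by auto
    obtain u where u: "u \<in> V" "u \<noteq> t" "{t,u} \<in> E" using nb tV by blast
    have fincent: "finite (cent V h)" using fin unfolding cent_def by auto
    have "\<exists>h1. goodh V E h1 \<and> card (cent V h1) \<le> card (cent V h) \<and> badc V h1 \<subseteq> badc V h - {t}"
    proof (cases "h u = u")
      case True
      from case1[OF less.prems t u True] show ?thesis
        using card_mono[OF fincent] by blast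
    next
      case hu: False
      show ?thesis
      proof (cases "\<exists>w\<in>V. w \<noteq> u \<and> w \<noteq> h u \<and> h w = h u")
        case True
        then obtain w where w: "w \<in> V" "w \<noteq> u" "w \<noteq> h u" "h w = h u" by blast
        from case2[OF less.prems t u hu w] show ?thesis
          using card_mono[OF fincent] by blast
      next
        case False
        then have w: "\<And>w. w \<in> V \<Longrightarrow> h w = h u \<Longrightarrow> w = u \<or> w = h u" by blast
        note c3 = case3[OF less.prems t u hu w]
        have "card (insert u (cent V h - {t})) \<le> card (cent V h)"
        proof -
          have "card (insert u (cent V h - {t})) \<le> Suc (card (cent V h - {t}))"
            by (simp add: card_insert_le_m1 card_insert_if fincent)
          also have "\<dots> = card (cent V h)" using card.remove[OF fincent tV(2)] by simp
          finally show ?thesis .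
        qed
        moreover have "card (cent V (h(u := u, h u := u, t := u))) \<le> card (insert u (cent V h - {t}))"
          using c3 fincent by (intro card_mono) auto
        ultimately show ?thesis using c3 by (meson order_trans)
      qed
    qed
    then obtain h1 where h1: "goodh V E h1" "card (cent V h1) \<le> card (cent V h)" "badc V h1 \<subseteq> badc V h - {t}"
      by blast
    have finb: "finite (badc V h)" using fin unfolding badc_def cent_def by auto
    have "badc V h1 \<subset> badc V h" using h1(3) t by blast
    then have "card (badc V h1) < card (badc V h)" using psubset_card_mono[OF finb] by blast
    from less.hyps[OF this h1(1)] h1(2) show ?thesis by (meson order_trans)
  qed
qed

lemma Dlem:
  assumes fin: "finite V" and g: "goodh V E h" and b: "badc V h = {}"
  defines "D \<equiv> mset_set ((\<lambda>v. {v, h v}) ` (V - cent V h))"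
  shows "domino_covering V E D \<and> saturated V D \<and> size D = card V - card (cent V h)"
proof -
  let ?f = "\<lambda>v. {v, h v}"
  let ?N = "V - cent V h"
  have nc: "\<And>v. v \<in> ?N \<longleftrightarrow> v \<in> V \<and> h v \<noteq> v" unfolding cent_def by auto
  have hh: "\<And>v. v \<in> V \<Longrightarrow> h (h v) = h v" "\<And>v. v \<in> V \<Longrightarrow> h v \<in> V"
    "\<And>v. v \<in> V \<Longrightarrow> h v \<noteq> v \<Longrightarrow> {v, h v} \<in> E" using g unfolding goodh_def by auto
  have priv: "v = w" if "v \<in> ?N" "w \<in> ?N" "v \<in> ?f w" for v w
  proof (rule ccontr)
    assume "v \<noteq> w"
    then have "v = h w" using that by auto
    then have "h v = v" using hh that nc by auto
    then show False using that nc by auto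
  qed
  have inj: "inj_on ?f ?N"
    by (rule inj_onI) (use priv in blast)
  have finN: "finite ?N" using fin by auto
  have setD: "set_mset D = ?f ` ?N" unfolding D_def using finN by simp
  have cN: "card ?N = card V - card (cent V h)"
    by (rule card_Diff_subset) (use fin in \<open>auto simp: cent_def\<close>)
  have size: "size D = card V - card (cent V h)"
    unfolding D_def size_mset_set card_image[OF inj] by (rule cN)
  have cov: "domino_covering V E D"
    unfolding domino_covering_def
  proof
    show "set_mset D \<subseteq> E"
    proof
      fix e assume "e \<in># D"
      then obtain v where v: "v \<in> ?N" "e = ?f v" using setD by auto
      then show "e \<in> E" using hh(3) nc by auto
    qed
    show "\<forall>v\<in>V. \<exists>e\<in>#D. v \<in> e"
    proof
      fix v assume v: "v \<in> V"
      show "\<exists>e\<in>#D. v \<in> e"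
      proof (cases "h v = v")
        case False
        then have "v \<in> ?N" using v unfolding cent_def by blast
        then have "?f v \<in># D" unfolding setD by (rule imageI)
        then show ?thesis by (intro bexI[of _ "?f v"]) simp_all
      next
        case True
        have "\<exists>w\<in>V. h w = v \<and> w \<noteq> v"
        proof (rule ccontr)
          assume "\<not> (\<exists>w\<in>V. h w = v \<and> w \<noteq> v)"
          then have "v \<in> badc V h" using True v unfolding badc_def cent_def by blast
          then show False using b by blast
        qed
        then obtain w where w: "w \<in> V" "h w = v" "w \<noteq> v" by blast
        have "h w \<noteq> w" using w(2,3) by simp
        then have "w \<in> ?N" using w(1) unfolding cent_def by blast
        then have "?f w \<in># D" unfolding setD by (rule imageI)
        then show ?thesis using w by (intro bexI[of _ "?f w"]) simp_all
      qed
    qed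
  qed
  have sat: "saturated V D"
    unfolding saturated_def
  proof
    fix e assume e: "e \<in># D"
    then obtain v where v: "v \<in> ?N" "e = ?f v" using setD by auto
    show "\<exists>x\<in>V. \<forall>e'\<in>#D - {#e#}. x \<notin> e'"
    proof (intro bexI[of _ v] ballI)
      show "v \<in> V" using v by auto
      fix e' assume e': "e' \<in># D - {#e#}"
      have cnt: "count D e = 1" unfolding D_def using e setD finN by (simp add: count_mset_set)
      have "e' \<noteq> e" using e' cnt by (auto simp: in_diff_count)
      moreover have "e' \<in># D" using e' by (meson in_diffD)
      then obtain w where w: "w \<in> ?N" "e' = ?f w" using setD by auto
      ultimately show "v \<notin> e'" using priv[OF v(1) w(1)] v w by auto
    qed
  qed
  show ?thesis using cov sat size by blast
qed


lemma nbr: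
  assumes sg: "simple_graph V E" and cg: "connected_graph V E" and c2: "card V \<ge> 2" and v: "v \<in> V"
  shows "\<exists>u\<in>V. u \<noteq> v \<and> {v,u} \<in> E"
proof -
  have fin: "finite V" using sg unfolding simple_graph_def by auto
  have "card (V - {v}) \<ge> 1" using c2 v fin by (simp add: card_Diff_singleton)
  then obtain w where w: "w \<in> V" "w \<noteq> v" by (metis Diff_iff card_0_eq empty_iff finite_Diff fin not_one_le_zero singletonI ex_in_conv)
  have "(adj E)\<^sup>*\<^sup>* v w" using cg v w unfolding connected_graph_def by blast
  then obtain y where "adj E v y" using w(2) by (metis converse_rtranclpE)
  then have "{v,y} \<in> E" unfolding adj_def .
  then have "v \<noteq> y \<and> v \<in> V \<and> y \<in> V" using edge_pair[OF sg] by blast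
  then show ?thesis using \<open>{v,y} \<in> E\<close> by (intro bexI[of _ y]) auto
qed

theorem mainTheorem16:
  fixes V :: "'a set" and E :: "'a set set"
  assumes "simple_graph V E" and "connected_graph V E" and "card V \<ge> 2"
  shows "(\<exists>D. domino_covering V E D \<and> saturated V D \<and>
            size D = card V - domination_number V E)
       \<and> (\<forall>D. domino_covering V E D \<and> saturated V D \<longrightarrow>
            size D \<le> card V - domination_number V E)"
proof -
  have sg: "simple_graph V E" using assms(1) .
  have fin: "finite V" using sg unfolding simple_graph_def by auto
  have nb: "\<forall>v\<in>V. \<exists>u\<in>V. u \<noteq> v \<and> {v,u} \<in> E" using nbr[OF assms] by blast
  have up: "\<forall>D. domino_covering V E D \<and> saturated V D \<longrightarrow>
            size D \<le> card V - domination_number V E"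
    using upper[OF sg] by fastforce
  let ?P = "\<lambda>k. \<exists>F. finite F \<and> card F = k \<and> (\<forall>S\<in>F. star_vset V E S) \<and> V \<subseteq> \<Union>F"
  obtain nbf where nbf: "\<And>v. v \<in> V \<Longrightarrow> nbf v \<in> V \<and> nbf v \<noteq> v \<and> {v, nbf v} \<in> E"
    using nb by metis
  have "?P (card ((\<lambda>v. {v, nbf v}) ` V))"
  proof (intro exI conjI)
    show "finite ((\<lambda>v. {v, nbf v}) ` V)" using fin by simp
    show "\<forall>S\<in>(\<lambda>v. {v, nbf v}) ` V. star_vset V E S"
    proof
      fix S assume "S \<in> (\<lambda>v. {v, nbf v}) ` V"
      then obtain v where v: "v \<in> V" "S = {v, nbf v}" by blast
      show "star_vset V E S" unfolding star_vset_def
        using nbf[OF v(1)] v by (intro bexI[of _ v]) (auto simp: adj_def)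
    qed
    show "V \<subseteq> \<Union>((\<lambda>v. {v, nbf v}) ` V)" by blast
  qed simp
  then have "?P (domination_number V E)" unfolding domination_number_def by (rule LeastI)
  then obtain F where F: "finite F" "card F = domination_number V E" "\<forall>S\<in>F. star_vset V E S" "V \<subseteq> \<Union>F"
    by blast
  obtain cen where cen: "\<And>S. S \<in> F \<Longrightarrow> cen S \<in> S \<and> S \<subseteq> V \<and> S - {cen S} \<noteq> {} \<and> (\<forall>x\<in>S - {cen S}. adj E (cen S) x)"
    using F(3) unfolding star_vset_def by metis
  define T where "T = cen ` F"
  define h where "h v = (if v \<in> T then v else cen (SOME S. S \<in> F \<and> v \<in> S))" for v
  have hT: "\<And>v. v \<in> V \<Longrightarrow> h v \<in> T" and hS: "\<And>v. v \<in> V \<Longrightarrow> v \<notin> T \<Longrightarrow>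
      (SOME S. S \<in> F \<and> v \<in> S) \<in> F \<and> v \<in> (SOME S. S \<in> F \<and> v \<in> S)"
  proof -
    fix v assume v: "v \<in> V"
    then have ex: "\<exists>S. S \<in> F \<and> v \<in> S" using F(4) by blast
    show "h v \<in> T"
    proof (cases "v \<in> T")
      case True then show ?thesis unfolding h_def by simp
    next
      case False then show ?thesis unfolding h_def T_def using someI_ex[OF ex] by auto
    qed
    show "v \<notin> T \<Longrightarrow> (SOME S. S \<in> F \<and> v \<in> S) \<in> F \<and> v \<in> (SOME S. S \<in> F \<and> v \<in> S)"
      using someI_ex[OF ex] by blast
  qed
  have TV: "T \<subseteq> V" unfolding T_def using cen by blast
  have g: "goodh V E h" unfolding goodh_def
  proof
    fix v assume v: "v \<in> V"
    have hhv: "h (h v) = h v" using hT[OF v] unfolding h_def by simp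
    show "h v \<in> V \<and> h (h v) = h v \<and> (h v \<noteq> v \<longrightarrow> {v, h v} \<in> E)"
    proof (cases "v \<in> T")
      case True then show ?thesis using v hhv unfolding h_def by simp
    next
      case False
      define S where "S = (SOME S. S \<in> F \<and> v \<in> S)"
      have S: "S \<in> F" "v \<in> S" using hS[OF v False] S_def by auto
      have hv: "h v = cen S" using False unfolding h_def S_def by simp
      have "cen S \<noteq> v" using False S(1) T_def by auto
      then have "adj E (cen S) v" using cen[OF S(1)] S(2) by blast
      then have "{v, cen S} \<in> E" unfolding adj_def by (simp add: insert_commute)
      then show ?thesis using hv hhv hT[OF v] TV by auto
    qed
  qed
  have "cent V h \<subseteq> T" using hT unfolding cent_def by (metis (mono_tags, lifting) mem_Collect_eq subsetI)
  then have ch: "card (cent V h) \<le> domination_number V E"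
    using card_mono[of T "cent V h"] card_image_le[OF F(1), of cen] F(2) T_def F(1) by fastforce
  obtain h' where h': "goodh V E h'" "badc V h' = {}" "card (cent V h') \<le> card (cent V h)"
    using fixlem[OF fin nb g] by blast
  define D where "D = mset_set ((\<lambda>v. {v, h' v}) ` (V - cent V h'))"
  have D: "domino_covering V E D \<and> saturated V D \<and> size D = card V - card (cent V h')"
    using Dlem[OF fin h'(1,2)] D_def by simp
  then have "size D \<le> card V - domination_number V E" using up by blast
  moreover have "size D \<ge> card V - domination_number V E" using D ch h'(3) by linarith
  ultimately show ?thesis using D up by (intro conjI exI[of _ D]) auto
qed
end
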